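(* Let $f:2^N\to\mathbb R$ be a monotone submodular function with curvature $c$, and let $\mathcal D$ be a product distribution on $2^N$ with bounded marginals. Then \textsc{MaxMargCont} is a $((1-c)^2-o(1))$-OPS algorithm: given a sufficiently large polynomial number of samples $(S_j,f(S_j))$ with $S_j$ i.i.d. from $\mathcal D$, with probability at least $1-\delta$ ($\delta\in[0,1)$ a constant) it returns a set $S$ with $|S|=k$ and $f(S)\ge((1-c)^2-o(1))\max_{T:|T|\le k}f(T)$.
   Context: $N=\{e_1,\dots,e_n\}$. $f_S(e)=f(S\cup\{e\})-f(S)$; $f$ is monotone if $f_S(e)\ge0$ and submodular if $f_S(e)\ge f_T(e)$ for all $S\subseteq T$. The curvature of $f$ is $c=1-\min_{e\in N,S\subseteq N}f_{S\setminus\{e\}}(e)/f(\{e\})$. A product distribution includes each element independently; it has bounded marginals if for every $e$, both $\Pr[e\in S]$ and $\Pr[e\notin S]$ ($S\sim\mathcal D$) lie between $1/\mathrm{poly}(n)$ and $1-1/\mathrm{poly}(n)$. \textsc{MaxMargCont}: for each $i$, let $\mathcal S_i$ (resp. $\mathcal S_{-i}$) be the samples containing (resp. not containing) $e_i$, compute $\hat v_i=\frac{1}{|\mathcal S_i|}\sum_{S\in\mathcal S_i}f(S)-\frac{1}{|\mathcal S_{-i}|}\sum_{S\in\mathcal S_{-i}}f(S)$, and return $\arg\max_{|T|=k}\sum_{e_i\in T}\hat v_i$. *)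

theory Defs
  imports "HOL-Probability.Probability"
begin

(* Ground set N = {e_1,...,e_n} is rendered as {0..<n}; f :: nat set => real is
   considered on subsets of {0..<n}. *)

definition monotone_set_fun :: "nat \<Rightarrow> (nat set \<Rightarrow> real) \<Rightarrow> bool" where
  "monotone_set_fun n f \<longleftrightarrow>
     (\<forall>S T. S \<subseteq> T \<and> T \<subseteq> {0..<n} \<longrightarrow> f S \<le> f T)"

definition marg :: "(nat set \<Rightarrow> real) \<Rightarrow> nat set \<Rightarrow> nat \<Rightarrow> real" where
  "marg f S e = f (S \<union> {e}) - f S"

definition submodular_set_fun :: "nat \<Rightarrow> (nat set \<Rightarrow> real) \<Rightarrow> bool" where
  "submodular_set_fun n f \<longleftrightarrow>
     (\<forall>S T e. S \<subseteq> T \<and> T \<subseteq> {0..<n} \<and> e \<in> {0..<n} \<longrightarrow> marg f S e \<ge> marg f T e)"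

(* curvature c = 1 - min_{e \<in> N, S \<subseteq> N} f_{S-{e}}(e) / f({e})
   (Isabelle convention x / 0 = 0 if some f({e}) = 0) *)
definition curvature :: "nat \<Rightarrow> (nat set \<Rightarrow> real) \<Rightarrow> real" where
  "curvature n f = 1 - Min {marg f (S - {e}) e / f {e} | e S. e \<in> {0..<n} \<and> S \<subseteq> {0..<n}}"

definition prod_dist :: "nat \<Rightarrow> (nat \<Rightarrow> real) \<Rightarrow> nat set pmf" where
  "prod_dist n p = map_pmf (\<lambda>x. {i \<in> {0..<n}. x i}) (Pi_pmf {0..<n} False (\<lambda>i. bernoulli_pmf (p i)))"

definition samples_pmf :: "nat \<Rightarrow> nat set pmf \<Rightarrow> (nat \<Rightarrow> nat set) pmf" where
  "samples_pmf m D = Pi_pmf {0..<m} {} (\<lambda>_. D)"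

definition avg_over :: "(nat \<Rightarrow> real) \<Rightarrow> nat set \<Rightarrow> real" where
  "avg_over g J = (\<Sum>j\<in>J. g j) / real (card J)"

definition mmc_estimate :: "nat \<Rightarrow> (nat \<Rightarrow> nat set) \<Rightarrow> (nat set \<Rightarrow> real) \<Rightarrow> nat \<Rightarrow> real" where
  "mmc_estimate m Ss f i =
     avg_over (\<lambda>j. f (Ss j)) {j \<in> {0..<m}. i \<in> Ss j}
   - avg_over (\<lambda>j. f (Ss j)) {j \<in> {0..<m}. i \<notin> Ss j}"

(* the possible outputs of MaxMargCont: all argmax_{|T|=k} \<Sum>_{e_i \<in> T} hat v_i
   (any tie-breaking) *)
definition mmc_outputs :: "nat \<Rightarrow> nat \<Rightarrow> nat \<Rightarrow> (nat \<Rightarrow> nat set) \<Rightarrow> (nat set \<Rightarrow> real) \<Rightarrow> nat set set" where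
  "mmc_outputs n k m Ss f =
     {T. T \<subseteq> {0..<n} \<and> card T = k \<and>
        (\<forall>T'. T' \<subseteq> {0..<n} \<and> card T' = k \<longrightarrow>
              (\<Sum>i\<in>T'. mmc_estimate m Ss f i) \<le> (\<Sum>i\<in>T. mmc_estimate m Ss f i))}"

definition opt_val :: "nat \<Rightarrow> nat \<Rightarrow> (nat set \<Rightarrow> real) \<Rightarrow> real" where
  "opt_val n k f = Max (f ` {T. T \<subseteq> {0..<n} \<and> card T \<le> k})"

end

theory Submission
  imports Defs
begin


lemma integral_bind_pmf_bdd:
  fixes f :: "'b \<Rightarrow> real"
  assumes "\<And>y. \<bar>f y\<bar> \<le> B"
  shows "measure_pmf.expectation (bind_pmf M N) f = measure_pmf.expectation M (\<lambda>x. measure_pmf.expectation (N x) f)"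
  using measurable_measure_pmf[of N] assms unfolding measure_pmf_bind
  by (intro integral_bind[where K="count_space UNIV" and B=B and B'=1])
     (auto simp: measure_pmf.emeasure_space_1 measure_pmf.finite_measure_axioms)

lemma integral_bind_pmf_supp:
  fixes f :: "'b \<Rightarrow> real"
  assumes "\<And>y. y \<in> set_pmf (bind_pmf M N) \<Longrightarrow> \<bar>f y\<bar> \<le> B"
  shows "measure_pmf.expectation (bind_pmf M N) f = measure_pmf.expectation M (\<lambda>x. measure_pmf.expectation (N x) f)"
proof -
  define g where "g y = (if y \<in> set_pmf (bind_pmf M N) then f y else 0)" for y
  have gb: "\<bar>g y\<bar> \<le> max B 0" for y using assms[of y] by (auto simp: g_def simp del: set_bind_pmf)
  have "measure_pmf.expectation (bind_pmf M N) f = measure_pmf.expectation (bind_pmf M N) g"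
    by (intro integral_cong_AE) (auto simp: AE_measure_pmf_iff g_def)
  also have "\<dots> = measure_pmf.expectation M (\<lambda>x. measure_pmf.expectation (N x) g)"
    by (rule integral_bind_pmf_bdd[OF gb])
  also have "\<dots> = measure_pmf.expectation M (\<lambda>x. measure_pmf.expectation (N x) f)"
    by (intro integral_cong_AE) (auto simp: AE_measure_pmf_iff g_def intro!: integral_cong_AE)
  finally show ?thesis .
qed

lemma integral_pair_pmf_supp:
  fixes f :: "_ \<Rightarrow> real"
  assumes "\<And>y. y \<in> set_pmf (pair_pmf A B) \<Longrightarrow> \<bar>f y\<bar> \<le> C"
  shows "measure_pmf.expectation (pair_pmf A B) f = measure_pmf.expectation A (\<lambda>a. measure_pmf.expectation B (\<lambda>b. f (a,b)))"
proof -
  have "measure_pmf.expectation (pair_pmf A B) f = measure_pmf.expectation A (\<lambda>a. measure_pmf.expectation (B \<bind> (\<lambda>b. return_pmf (a, b))) f)"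
    unfolding pair_pmf_def by (rule integral_bind_pmf_supp[OF assms[unfolded pair_pmf_def]])
  also have "\<dots> = measure_pmf.expectation A (\<lambda>a. measure_pmf.expectation B (\<lambda>b. f (a,b)))"
    by (simp add: map_pmf_def[symmetric])
  finally show ?thesis .
qed

lemma integral_pair_pmf_supp':
  fixes F :: "_ \<Rightarrow> _ \<Rightarrow> real"
  assumes "\<And>a b. a \<in> set_pmf A \<Longrightarrow> b \<in> set_pmf B \<Longrightarrow> \<bar>F a b\<bar> \<le> C"
  shows "measure_pmf.expectation (pair_pmf A B) (\<lambda>(a,b). F a b) = measure_pmf.expectation A (\<lambda>a. measure_pmf.expectation B (\<lambda>b. F a b))"
  using assms by (subst integral_pair_pmf_supp[where C=C]) auto

lemma integrable_pmf_bdd: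
  fixes f :: "_ \<Rightarrow> real"
  shows "(\<And>x. x \<in> set_pmf M \<Longrightarrow> \<bar>f x\<bar> \<le> B) \<Longrightarrow> integrable (measure_pmf M) f"
  by (intro measure_pmf.integrable_const_bound[where B=B]) (auto simp: AE_measure_pmf_iff)

lemma set_Pi_pmf_coord:
  assumes "finite A" "h \<in> set_pmf (Pi_pmf A d (\<lambda>_. D))" "j \<in> A"
  shows "h j \<in> set_pmf D"
  using set_Pi_pmf_subset'[OF assms(1), of d "\<lambda>_. D"] assms(2,3) by (auto simp: PiE_dflt_def)

lemma pi_sum_moments:
  fixes g :: "'a \<Rightarrow> real"
  assumes fin: "finite A" and bd: "\<And>x. x \<in> set_pmf D \<Longrightarrow> \<bar>g x\<bar> \<le> B"
    and mean: "measure_pmf.expectation D g = 0"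
  shows "measure_pmf.expectation (Pi_pmf A d (\<lambda>_. D)) (\<lambda>h. \<Sum>j\<in>A. g (h j)) = 0 \<and>
         measure_pmf.expectation (Pi_pmf A d (\<lambda>_. D)) (\<lambda>h. (\<Sum>j\<in>A. g (h j))^2) \<le> real (card A) * B^2"
  using fin
proof (induction A rule: finite_induct)
  case empty
  then show ?case by simp
next
  case (insert x A)
  let ?P = "Pi_pmf A d (\<lambda>_. D)"
  let ?S = "\<lambda>h. \<Sum>j\<in>A. g (h j)"
  have B0: "0 \<le> B" if "y \<in> set_pmf D" for y using bd[OF that] by linarith
  have Sb: "\<bar>?S h\<bar> \<le> real (card A) * B" if "h \<in> set_pmf ?P" for h
  proof -
    have "\<bar>?S h\<bar> \<le> (\<Sum>j\<in>A. \<bar>g (h j)\<bar>)" by (rule sum_abs)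
    also have "\<dots> \<le> (\<Sum>j\<in>A. B)"
      by (intro sum_mono bd set_Pi_pmf_coord[OF insert(1) that])
    finally show ?thesis by simp
  qed
  have S2b: "\<bar>(?S h)^2\<bar> \<le> (real (card A) * B)^2" if "h \<in> set_pmf ?P" for h
    proof -
    have "0 \<le> real (card A) * B" using Sb[OF that] by (rule order_trans[OF abs_ge_zero])
    then show ?thesis using Sb[OF that] by (simp add: abs_le_square_iff[symmetric])
  qed
  have intS: "integrable ?P ?S" by (rule integrable_pmf_bdd[OF Sb])
  have intS2: "integrable ?P (\<lambda>h. (?S h)^2)" by (rule integrable_pmf_bdd[OF S2b])
  have ES: "measure_pmf.expectation ?P ?S = 0" and ES2: "measure_pmf.expectation ?P (\<lambda>h. (?S h)^2) \<le> real (card A) * B^2"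
    using insert(3) by auto
  have sumeq: "(\<Sum>j\<in>insert x A. g (if j = x then y else h j)) = g y + ?S h" for h y
  proof -
    have "(\<Sum>j\<in>A. g (if j = x then y else h j)) = ?S h"
      using insert(2) by (intro sum.cong) auto
    then show ?thesis using insert(1,2) by simp
  qed
  have PI: "Pi_pmf (insert x A) d (\<lambda>_. D) = map_pmf (\<lambda>(y,f). f(x:=y)) (pair_pmf D ?P)"
    by (rule Pi_pmf_insert[OF insert(1,2)])
  have gb2: "\<bar>g y\<bar> \<le> B" if "y \<in> set_pmf D" for y using bd that by auto
  have E1: "measure_pmf.expectation (pair_pmf D ?P) (\<lambda>(y,h). g y + ?S h) = 0"
  proof -
    have "measure_pmf.expectation (pair_pmf D ?P) (\<lambda>(y,h). g y + ?S h) =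
        measure_pmf.expectation D (\<lambda>y. measure_pmf.expectation ?P (\<lambda>h. g y + ?S h))"
    proof -
      have bnd: "\<bar>g y + ?S h\<bar> \<le> B + real (card A) * B" if "y \<in> set_pmf D" "h \<in> set_pmf ?P" for y h
        using that gb2 Sb by (auto intro: abs_triangle_ineq[THEN order_trans] add_mono)
      show ?thesis by (rule integral_pair_pmf_supp'[OF bnd])
    qed
    also have "\<dots> = measure_pmf.expectation D g"
      using intS ES by (simp add: Bochner_Integration.integral_add)
    finally show ?thesis using mean by simp
  qed
  have E2: "measure_pmf.expectation (pair_pmf D ?P) (\<lambda>(y,h). (g y + ?S h)^2) \<le> real (card (insert x A)) * B^2"
  proof -
    have "measure_pmf.expectation (pair_pmf D ?P) (\<lambda>(y,h). (g y + ?S h)^2) =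
        measure_pmf.expectation D (\<lambda>y. measure_pmf.expectation ?P (\<lambda>h. (g y + ?S h)^2))"
    proof -
      have bnd: "\<bar>(g y + ?S h)^2\<bar> \<le> (B + real (card A) * B)^2" if z: "y \<in> set_pmf D" "h \<in> set_pmf ?P" for y h
      proof -
        have a: "\<bar>g y + ?S h\<bar> \<le> B + real (card A) * B"
          using z gb2 Sb by (auto intro: abs_triangle_ineq[THEN order_trans] add_mono)
        have "0 \<le> B + real (card A) * B" using a by (rule order_trans[OF abs_ge_zero])
        then show ?thesis using a z by (simp add: abs_le_square_iff[symmetric])
      qed
      show ?thesis by (rule integral_pair_pmf_supp'[OF bnd])
    qed
    also have "\<dots> = measure_pmf.expectation D (\<lambda>y. (g y)^2 + measure_pmf.expectation ?P (\<lambda>h. (?S h)^2))"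
    proof (rule Bochner_Integration.integral_cong[OF refl])
      fix y
      have eq: "(\<lambda>h. (g y + ?S h)^2) = (\<lambda>h. (g y)^2 + ((2 * g y) * ?S h + (?S h)^2))"
        by (simp add: fun_eq_iff power2_sum)
      have "measure_pmf.expectation ?P (\<lambda>h. (g y + ?S h)^2) = 
          (g y)^2 + ((2 * g y) * measure_pmf.expectation ?P ?S + measure_pmf.expectation ?P (\<lambda>h. (?S h)^2))"
        unfolding eq using intS intS2
        by (simp add: Bochner_Integration.integral_add)
      then show "measure_pmf.expectation ?P (\<lambda>h. (g y + ?S h)^2) = (g y)^2 + measure_pmf.expectation ?P (\<lambda>h. (?S h)^2)"
        using ES by simp
    qed
    also have "\<dots> \<le> B^2 + real (card A) * B^2"
    proof -
      have g2b: "\<bar>(g y)^2\<bar> \<le> B^2" if "y \<in> set_pmf D" for y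
        using gb2[OF that] by (simp add: abs_le_square_iff[symmetric] power2_abs)
      have ig2: "integrable D (\<lambda>y. (g y)^2)" by (rule integrable_pmf_bdd[OF g2b])
      have "measure_pmf.expectation D (\<lambda>y. (g y)^2) \<le> B^2"
        using g2b by (intro measure_pmf.integral_le_const ig2) (auto simp: AE_measure_pmf_iff)
      then show ?thesis using ig2 ES2 by (simp add: Bochner_Integration.integral_add)
    qed
    finally show ?thesis using insert by (simp add: algebra_simps)
  qed
  have R1: "measure_pmf.expectation (Pi_pmf (insert x A) d (\<lambda>_. D)) (\<lambda>h. \<Sum>j\<in>insert x A. g (h j))
      = measure_pmf.expectation (pair_pmf D ?P) (\<lambda>(y,h). g y + ?S h)"
    unfolding PI integral_map_pmf
    by (rule Bochner_Integration.integral_cong) (auto simp: sumeq split: prod.split)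
  have R2: "measure_pmf.expectation (Pi_pmf (insert x A) d (\<lambda>_. D)) (\<lambda>h. (\<Sum>j\<in>insert x A. g (h j))^2)
      = measure_pmf.expectation (pair_pmf D ?P) (\<lambda>(y,h). (g y + ?S h)^2)"
    unfolding PI integral_map_pmf
    by (rule Bochner_Integration.integral_cong) (auto simp: sumeq split: prod.split)
  show ?case using E1 E2 R1 R2 by simp
qed

lemma sample_dev:
  fixes g :: "'a \<Rightarrow> real"
  assumes bd: "\<And>x. x \<in> set_pmf D \<Longrightarrow> \<bar>g x\<bar> \<le> B"
    and mean: "measure_pmf.expectation D g = 0" and s: "s > 0" and m: "m > 0"
  shows "measure_pmf.prob (Pi_pmf {0..<m} d (\<lambda>_. D)) {Ss. \<bar>\<Sum>j\<in>{0..<m}. g (Ss j)\<bar> > real m * s} \<le> B^2 / (real m * s^2)"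
proof -
  let ?P = "Pi_pmf {0..<m} d (\<lambda>_. D)"
  let ?S = "\<lambda>h. \<Sum>j\<in>{0..<m}. g (h j)"
  have mom: "measure_pmf.expectation ?P (\<lambda>h. (?S h)^2) \<le> real m * B^2"
    using pi_sum_moments[OF _ bd mean, of "{0..<m}" d] by simp
  have Sb: "\<bar>?S h\<bar> \<le> real m * B" if "h \<in> set_pmf ?P" for h
  proof -
    have "\<bar>?S h\<bar> \<le> (\<Sum>j\<in>{0..<m}. \<bar>g (h j)\<bar>)" by (rule sum_abs)
    also have "\<dots> \<le> (\<Sum>j\<in>{0..<m}. B)"
      by (intro sum_mono bd set_Pi_pmf_coord[OF _ that]) auto
    finally show ?thesis by simp
  qed
  have S2b: "\<bar>(?S h)^2\<bar> \<le> (real m * B)^2" if "h \<in> set_pmf ?P" for h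
  proof -
    have "0 \<le> real m * B" using Sb[OF that] by (rule order_trans[OF abs_ge_zero])
    then show ?thesis using Sb[OF that] by (simp add: abs_le_square_iff[symmetric])
  qed
  have int2: "integrable ?P (\<lambda>h. (?S h)^2)" by (rule integrable_pmf_bdd[OF S2b])
  have pos: "0 < (real m * s)^2" using s m by simp
  have "measure_pmf.prob ?P {Ss. \<bar>?S Ss\<bar> > real m * s} \<le> measure_pmf.prob ?P {x \<in> space ?P. (?S x)^2 \<ge> (real m * s)^2}"
  proof (rule measure_pmf.finite_measure_mono)
    show "{Ss. \<bar>?S Ss\<bar> > real m * s} \<subseteq> {x \<in> space ?P. (?S x)^2 \<ge> (real m * s)^2}"
    proof
      fix x assume "x \<in> {Ss. \<bar>?S Ss\<bar> > real m * s}"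
      then have "\<bar>?S x\<bar> > real m * s" by simp
      moreover have "0 \<le> real m * s" using s by simp
      ultimately have "(real m * s)^2 \<le> (?S x)^2"
        by (metis abs_le_square_iff abs_of_nonneg less_le_not_le nle_le)
      then show "x \<in> {x \<in> space ?P. (?S x)^2 \<ge> (real m * s)^2}" by simp
    qed
  qed simp
  also have "\<dots> \<le> measure_pmf.expectation ?P (\<lambda>h. (?S h)^2) / (real m * s)^2"
    by (rule integral_Markov_inequality_measure[OF int2, where A="{}"]) (use pos in auto)
  also have "\<dots> \<le> real m * B^2 / (real m * s)^2"
    by (rule divide_right_mono[OF mom]) simp
  also have "\<dots> = B^2 / (real m * s^2)"
    using m by (simp add: power2_eq_square field_simps)
  finally show ?thesis .
qed

definition restR :: "nat \<Rightarrow> nat \<Rightarrow> (nat \<Rightarrow> bool) \<Rightarrow> nat set" where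
  "restR n i h = {j \<in> {0..<n}. j \<noteq> i \<and> h j}"

lemma prod_dist_split:
  fixes F :: "nat set \<Rightarrow> real"
  assumes i: "i < n" and q: "0 \<le> p i" "p i \<le> 1"
    and Fb: "\<And>S. S \<subseteq> {0..<n} \<Longrightarrow> \<bar>F S\<bar> \<le> C"
  shows "measure_pmf.expectation (prod_dist n p) F =
     p i * measure_pmf.expectation (Pi_pmf ({0..<n}-{i}) False (\<lambda>i. bernoulli_pmf (p i))) (\<lambda>h. F (insert i (restR n i h)))
     + (1 - p i) * measure_pmf.expectation (Pi_pmf ({0..<n}-{i}) False (\<lambda>i. bernoulli_pmf (p i))) (\<lambda>h. F (restR n i h))"
proof -
  let ?P = "Pi_pmf ({0..<n}-{i}) False (\<lambda>i. bernoulli_pmf (p i))"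
  have ins: "{0..<n} = insert i ({0..<n}-{i})" using i by auto
  have PI: "Pi_pmf {0..<n} False (\<lambda>i. bernoulli_pmf (p i)) = map_pmf (\<lambda>(y,f). f(i:=y)) (pair_pmf (bernoulli_pmf (p i)) ?P)"
    by (subst ins, rule Pi_pmf_insert) auto
  have seteq: "{j \<in> {0..<n}. (h(i:=y)) j} = (if y then insert i (restR n i h) else restR n i h)" for h y
    using i by (auto simp: restR_def)
  have "measure_pmf.expectation (prod_dist n p) F =
      measure_pmf.expectation (pair_pmf (bernoulli_pmf (p i)) ?P) (\<lambda>(y,h). F (if y then insert i (restR n i h) else restR n i h))"
    unfolding prod_dist_def PI integral_map_pmf
    apply (rule Bochner_Integration.integral_cong[OF refl])
    subgoal for z by (cases z) (simp only: prod.case seteq)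
    done
  also have "\<dots> = measure_pmf.expectation (bernoulli_pmf (p i)) (\<lambda>y. measure_pmf.expectation ?P (\<lambda>h. F (if y then insert i (restR n i h) else restR n i h)))"
    by (rule integral_pair_pmf_supp'[where C=C]) (use i in \<open>auto intro!: Fb simp: restR_def\<close>)
  also have "\<dots> = p i * measure_pmf.expectation ?P (\<lambda>h. F (insert i (restR n i h)))
     + (1 - p i) * measure_pmf.expectation ?P (\<lambda>h. F (restR n i h))"
    using q by simp
  finally show ?thesis .
qed

lemma f_nonneg:
  assumes "f {} = 0" "monotone_set_fun n f" "S \<subseteq> {0..<n}"
  shows "0 \<le> f S"
  using assms unfolding monotone_set_fun_def by (metis empty_subsetI)

lemma marg_nonneg:
  assumes "monotone_set_fun n f" "S \<subseteq> {0..<n}" "e < n"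
  shows "0 \<le> marg f S e"
  using assms unfolding monotone_set_fun_def marg_def by (metis Un_upper1 diff_ge_0_iff_ge Un_least atLeastLessThan_iff empty_subsetI insert_subset zero_le)

lemma f_subadd:
  assumes f0: "f {} = 0" and sm: "submodular_set_fun n f" and S: "S \<subseteq> {0..<n}"
  shows "f S \<le> (\<Sum>i\<in>S. f {i})"
proof -
  have "finite S" using S finite_subset by blast
  then show ?thesis using S
  proof (induction S rule: finite_induct)
    case empty then show ?case using f0 by simp
  next
    case (insert x F)
    have "marg f F x \<le> marg f {} x"
      using sm insert(4) unfolding submodular_set_fun_def by auto
    then have "f (insert x F) \<le> f F + f {x}" using f0 by (simp add: marg_def)
    then show ?case using insert by simp
  qed
qed

definition curvQ :: "nat \<Rightarrow> (nat set \<Rightarrow> real) \<Rightarrow> real set" where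
  "curvQ n f = {marg f (S - {e}) e / f {e} | e S. e \<in> {0..<n} \<and> S \<subseteq> {0..<n}}"

lemma curvQ_finite: "finite (curvQ n f)"
proof -
  have "curvQ n f = (\<lambda>(e,S). marg f (S - {e}) e / f {e}) ` ({0..<n} \<times> Pow {0..<n})"
    unfolding curvQ_def by force
  then show ?thesis by simp
qed

lemma curv_facts:
  assumes f0: "f {} = 0" and mo: "monotone_set_fun n f" and sm: "submodular_set_fun n f" and n: "0 < n"
  shows "0 \<le> curvature n f" "curvature n f \<le> 1"
    "\<And>e S. e < n \<Longrightarrow> S \<subseteq> {0..<n} \<Longrightarrow> (1 - curvature n f) * f {e} \<le> marg f (S - {e}) e"
proof -
  have cdef: "curvature n f = 1 - Min (curvQ n f)" unfolding curvature_def curvQ_def by simp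
  have ne: "curvQ n f \<noteq> {}" using n unfolding curvQ_def by auto
  have fe: "0 \<le> f {e}" if "e < n" for e using f_nonneg[OF f0 mo, of "{e}"] that by auto
  have mg: "0 \<le> marg f (S - {e}) e" if "e < n" "S \<subseteq> {0..<n}" for e S
    using marg_nonneg[OF mo, of "S - {e}" e] that by auto
  have qge: "0 \<le> x" if "x \<in> curvQ n f" for x
    using that fe mg unfolding curvQ_def by auto
  have "Min (curvQ n f) \<in> curvQ n f" using Min_in[OF curvQ_finite ne] .
  then have m0: "0 \<le> Min (curvQ n f)" by (rule qge)
  have "marg f ({} - {0}) 0 / f {0} \<in> curvQ n f" unfolding curvQ_def mem_Collect_eq
    using n by (intro exI[of _ 0] exI[of _ "{}"]) auto
  then have "Min (curvQ n f) \<le> marg f ({} - {0}) 0 / f {0}" by (rule Min_le[OF curvQ_finite])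
  also have "\<dots> \<le> 1" using f0 by (simp add: marg_def)
  finally have m1: "Min (curvQ n f) \<le> 1" .
  show "0 \<le> curvature n f" "curvature n f \<le> 1" using m0 m1 cdef by auto
  fix e S assume e: "e < n" and S: "S \<subseteq> {0..<n}"
  have "marg f (S - {e}) e / f {e} \<in> curvQ n f" unfolding curvQ_def mem_Collect_eq
    using e S by (intro exI[of _ e] exI[of _ S]) auto
  then have le: "Min (curvQ n f) \<le> marg f (S - {e}) e / f {e}" by (rule Min_le[OF curvQ_finite])
  show "(1 - curvature n f) * f {e} \<le> marg f (S - {e}) e"
  proof (cases "f {e} = 0")
    case True then show ?thesis using mg[OF e S] by simp
  next
    case False
    then have "0 < f {e}" using fe[OF e] by simp
    then show ?thesis using le cdef by (simp add: le_divide_eq)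
  qed
qed

lemma f_curv_lower:
  assumes f0: "f {} = 0" and mo: "monotone_set_fun n f" and sm: "submodular_set_fun n f" and n: "0 < n"
    and T: "T \<subseteq> {0..<n}"
  shows "(1 - curvature n f) * (\<Sum>i\<in>T. f {i}) \<le> f T"
proof -
  have "finite T" using T finite_subset by blast
  then show ?thesis using T
  proof (induction T rule: finite_induct)
    case empty then show ?case using f0 by simp
  next
    case (insert x F)
    have "(1 - curvature n f) * f {x} \<le> marg f (insert x F - {x}) x"
      using curv_facts(3)[OF f0 mo sm n, of x "insert x F"] insert(4) by auto
    also have "insert x F - {x} = F" using insert(2) by auto
    finally have "(1 - curvature n f) * f {x} \<le> f (insert x F) - f F" by (simp add: marg_def)
    then show ?case using insert by (simp add: algebra_simps)
  qed
qed

lemma opt_facts: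
  assumes "k \<le> n"
  shows "\<exists>T. T \<subseteq> {0..<n} \<and> card T \<le> k \<and> f T = opt_val n k f"
    "\<And>T. T \<subseteq> {0..<n} \<Longrightarrow> card T \<le> k \<Longrightarrow> f T \<le> opt_val n k f"
proof -
  have fin: "finite {T. T \<subseteq> {0..<n} \<and> card T \<le> k}" by (rule finite_subset[of _ "Pow {0..<n}"]) auto
  have ne: "{T. T \<subseteq> {0..<n} \<and> card T \<le> k} \<noteq> {}" by auto
  have "opt_val n k f \<in> f ` {T. T \<subseteq> {0..<n} \<and> card T \<le> k}"
    unfolding opt_val_def using fin ne by (intro Max_in) auto
  then show "\<exists>T. T \<subseteq> {0..<n} \<and> card T \<le> k \<and> f T = opt_val n k f" by auto
  fix T assume "T \<subseteq> {0..<n}" "card T \<le> k"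
  then show "f T \<le> opt_val n k f" unfolding opt_val_def using fin by (intro Max_ge) auto
qed




lemma sum_dev:
  assumes "finite U" "\<And>i. i \<in> U \<Longrightarrow> \<bar>vh i - v i\<bar> \<le> (\<eta>::real)"
  shows "\<bar>(\<Sum>i\<in>U. vh i) - (\<Sum>i\<in>U. v i)\<bar> \<le> real (card U) * \<eta>"
proof -
  have "\<bar>(\<Sum>i\<in>U. vh i) - (\<Sum>i\<in>U. v i)\<bar> = \<bar>\<Sum>i\<in>U. vh i - v i\<bar>" by (simp add: sum_subtractf)
  also have "\<dots> \<le> (\<Sum>i\<in>U. \<bar>vh i - v i\<bar>)" by (rule sum_abs)
  also have "\<dots> \<le> (\<Sum>i\<in>U. \<eta>)" by (intro sum_mono assms(2))
  finally show ?thesis by simp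
qed

lemma det_main:
  assumes f0: "f {} = 0" and mo: "monotone_set_fun n f" and sm: "submodular_set_fun n f"
    and n: "0 < n" and k: "1 \<le> k" "k \<le> n"
    and v: "\<And>i. i < n \<Longrightarrow> (1 - curvature n f) * f {i} \<le> v i \<and> v i \<le> f {i}"
    and vh: "\<And>i. i < n \<Longrightarrow> \<bar>vh i - v i\<bar> \<le> \<eta>"
    and eta: "0 \<le> \<eta>" "2 * real n * \<eta> \<le> \<epsilon> * opt_val n k f"
    and T: "T \<subseteq> {0..<n}" "card T = k"
       "\<forall>T'. T' \<subseteq> {0..<n} \<and> card T' = k \<longrightarrow> (\<Sum>i\<in>T'. vh i) \<le> (\<Sum>i\<in>T. vh i)"
  shows "((1 - curvature n f)^2 - \<epsilon>) * opt_val n k f \<le> f T"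
proof -
  define c' where "c' = 1 - curvature n f"
  have c0: "0 \<le> c'" and c1: "c' \<le> 1" using curv_facts(1,2)[OF f0 mo sm n] by (auto simp: c'_def)
  obtain Ts where Ts: "Ts \<subseteq> {0..<n}" "card Ts \<le> k" "f Ts = opt_val n k f"
    using opt_facts(1)[OF k(2)] by blast
  have finTs: "finite Ts" using Ts(1) by (rule finite_subset) simp
  have "k - card Ts \<le> card ({0..<n} - Ts)" using Ts k by (simp add: card_Diff_subset finTs)
  then obtain X where X: "X \<subseteq> {0..<n} - Ts" "card X = k - card Ts"
    by (rule obtain_subset_with_card_n)
  define T' where "T' = Ts \<union> X"
  have finX: "finite X" using X(1) by (rule finite_subset) simp
  have T'sub: "T' \<subseteq> {0..<n}" using X Ts unfolding T'_def by auto
  have T'card: "card T' = k" unfolding T'_def using X Ts finTs finX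
    by (subst card_Un_disjoint) auto
  have finT: "finite T" using T(1) by (rule finite_subset) simp
  have vnn: "0 \<le> v i" if "i < n" for i
  proof -
    have "0 \<le> f {i}" using f_nonneg[OF f0 mo, of "{i}"] that by auto
    then have "0 \<le> c' * f {i}" using c0 by simp
    then show ?thesis using v[OF that] unfolding c'_def by linarith
  qed
  have s1: "c' * (\<Sum>i\<in>T. f {i}) \<le> f T" using f_curv_lower[OF f0 mo sm n T(1)] by (simp add: c'_def)
  have s2: "(\<Sum>i\<in>T. v i) \<le> (\<Sum>i\<in>T. f {i})" using T(1) v by (intro sum_mono) auto
  have s3: "(\<Sum>i\<in>T. vh i) \<le> (\<Sum>i\<in>T. v i) + real k * \<eta>"
  proof -
    have "\<bar>(\<Sum>i\<in>T. vh i) - (\<Sum>i\<in>T. v i)\<bar> \<le> real (card T) * \<eta>"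
      using T(1) vh by (intro sum_dev[OF finT]) auto
    then show ?thesis using T(2) by (auto simp: abs_le_iff)
  qed
  have s4: "(\<Sum>i\<in>T'. vh i) \<le> (\<Sum>i\<in>T. vh i)" using T(3) T'sub T'card by blast
  have s5: "(\<Sum>i\<in>T'. v i) \<le> (\<Sum>i\<in>T'. vh i) + real k * \<eta>"
  proof -
    have "\<bar>(\<Sum>i\<in>T'. vh i) - (\<Sum>i\<in>T'. v i)\<bar> \<le> real (card T') * \<eta>"
      using T'sub vh finTs finX unfolding T'_def by (intro sum_dev) auto
    then show ?thesis using T'card by (auto simp: abs_le_iff)
  qed
  have s6: "(\<Sum>i\<in>Ts. v i) \<le> (\<Sum>i\<in>T'. v i)"
    using T'sub finTs finX vnn unfolding T'_def by (intro sum_mono2) auto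
  have s7: "c' * (\<Sum>i\<in>Ts. f {i}) \<le> (\<Sum>i\<in>Ts. v i)"
    unfolding sum_distrib_left using Ts(1) v by (intro sum_mono) (auto simp: c'_def)
  have s8: "f Ts \<le> (\<Sum>i\<in>Ts. f {i})" by (rule f_subadd[OF f0 sm Ts(1)])
  have A: "c' * opt_val n k f - 2 * real k * \<eta> \<le> (\<Sum>i\<in>T. v i)"
  proof -
    have "c' * opt_val n k f \<le> c' * (\<Sum>i\<in>Ts. f {i})" using s8 Ts(3) c0 by (simp add: mult_left_mono)
    then show ?thesis using s3 s4 s5 s6 s7 by linarith
  qed
  have C: "c' * (c' * opt_val n k f - 2 * real k * \<eta>) \<le> f T"
  proof -
    have "c' * (c' * opt_val n k f - 2 * real k * \<eta>) \<le> c' * (\<Sum>i\<in>T. v i)"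
      using A c0 by (rule mult_left_mono)
    also have "\<dots> \<le> c' * (\<Sum>i\<in>T. f {i})" using s2 c0 by (rule mult_left_mono)
    finally show ?thesis using s1 by linarith
  qed
  have D: "c' * (c' * opt_val n k f - 2 * real k * \<eta>) = c'^2 * opt_val n k f - c' * (2 * real k * \<eta>)"
    by (simp add: right_diff_distrib power2_eq_square mult.assoc)
  have E: "c' * (2 * real k * \<eta>) \<le> 1 * (2 * real n * \<eta>)"
    using c0 c1 k eta by (intro mult_mono) auto
  have F: "((1 - curvature n f)^2 - \<epsilon>) * opt_val n k f = c'^2 * opt_val n k f - \<epsilon> * opt_val n k f"
    unfolding c'_def by (simp add: left_diff_distrib)
  show ?thesis unfolding F using C D E eta by linarith
qed

lemma avg_close:
  fixes x :: "nat \<Rightarrow> real"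
  assumes J: "finite J" and c: "real m * r / 2 \<le> real (card J)" and mr: "0 < real m * r"
    and h: "\<bar>(\<Sum>j\<in>J. x j) - \<mu> * real (card J)\<bar> \<le> real m * t"
  shows "\<bar>avg_over x J - \<mu>\<bar> \<le> 2 * t / r"
proof -
  have cp: "0 < real (card J)" using c mr by linarith
  have m0: "0 < real m" using mr by (metis mult_eq_0_iff of_nat_0_le_iff order_le_less zero_less_mult_pos)
  have r0: "0 < r" using mr m0 by (simp add: zero_less_mult_iff)
  have "0 \<le> real m * t" using h abs_ge_zero order_trans by blast
  then have t0: "0 \<le> t" using m0 by (simp add: zero_le_mult_iff)
  have "avg_over x J - \<mu> = ((\<Sum>j\<in>J. x j) - \<mu> * real (card J)) / real (card J)"
    unfolding avg_over_def using cp by (simp add: field_simps)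
  then have "\<bar>avg_over x J - \<mu>\<bar> = \<bar>(\<Sum>j\<in>J. x j) - \<mu> * real (card J)\<bar> / real (card J)"
    using cp by simp
  also have "\<dots> \<le> real m * t / real (card J)" using h cp by (simp add: divide_right_mono)
  also have "\<dots> \<le> real m * t / (real m * r / 2)"
    using c mr t0 m0 by (intro divide_left_mono) auto
  also have "\<dots> = 2 * t / r" using m0 by (simp add: field_simps)
  finally show ?thesis .
qed

lemma est_close:
  fixes f :: "nat set \<Rightarrow> real"
  assumes m: "0 < m" and r: "0 < r" "r \<le> q" "q \<le> 1 - r"
    and hW: "\<bar>\<Sum>j\<in>{0..<m}. (if i \<in> Ss j then f (Ss j) - \<mu>1 else 0)\<bar> \<le> real m * t"
    and hU: "\<bar>\<Sum>j\<in>{0..<m}. (if i \<notin> Ss j then f (Ss j) - \<mu>0 else 0)\<bar> \<le> real m * t"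
    and hY: "\<bar>\<Sum>j\<in>{0..<m}. ((if i \<in> Ss j then 1 else 0) - q)\<bar> \<le> real m * (r / 2)"
  shows "\<bar>mmc_estimate m Ss f i - (\<mu>1 - \<mu>0)\<bar> \<le> 4 * t / r"
proof -
  define J1 where "J1 = {j \<in> {0..<m}. i \<in> Ss j}"
  define J0 where "J0 = {j \<in> {0..<m}. i \<notin> Ss j}"
  have fin: "finite J1" "finite J0" unfolding J1_def J0_def by auto
  have cardsum: "card J1 + card J0 = m"
  proof -
    have "card (J1 \<union> J0) = card J1 + card J0" using fin by (intro card_Un_disjoint) (auto simp: J1_def J0_def)
    moreover have "J1 \<union> J0 = {0..<m}" unfolding J1_def J0_def by auto
    ultimately show ?thesis by simp
  qed
  have s1: "(\<Sum>j\<in>{0..<m}. (if i \<in> Ss j then f (Ss j) - \<mu>1 else 0)) = (\<Sum>j\<in>J1. f (Ss j)) - \<mu>1 * real (card J1)"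
    unfolding J1_def by (simp add: sum.inter_filter[symmetric] sum_subtractf)
  have s0: "(\<Sum>j\<in>{0..<m}. (if i \<notin> Ss j then f (Ss j) - \<mu>0 else 0)) = (\<Sum>j\<in>J0. f (Ss j)) - \<mu>0 * real (card J0)"
    unfolding J0_def by (simp add: sum.inter_filter[symmetric] sum_subtractf)
  have sY: "(\<Sum>j\<in>{0..<m}. ((if i \<in> Ss j then 1 else 0) - q)) = real (card J1) - real m * q"
  proof -
    have "(\<Sum>j\<in>{0..<m}. (if i \<in> Ss j then 1 else 0::real)) = real (card J1)"
      unfolding J1_def by (simp add: sum.inter_filter[symmetric])
    then show ?thesis by (simp add: sum_subtractf)
  qed
  have mr: "0 < real m * r" using m r by simp
  have habs: "\<bar>real (card J1) - real m * q\<bar> \<le> real m * (r / 2)"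
    by (subst sY[symmetric]) (rule hY)
  have c1: "real m * r / 2 \<le> real (card J1)"
  proof -
    have "real m * r \<le> real m * q" using r by (simp add: mult_left_mono)
    moreover have "- (real (card J1) - real m * q) \<le> real m * (r / 2)" by (rule abs_le_D2[OF habs])
    moreover have "real m * (r / 2) = real m * r / 2" by simp
    ultimately show ?thesis by linarith
  qed
  have c0: "real m * r / 2 \<le> real (card J0)"
  proof -
    have "real m * r \<le> real m * (1 - q)" using r by (simp add: mult_left_mono)
    moreover have "real (card J1) + real (card J0) = real m" using cardsum by (metis of_nat_add)
    moreover have "real (card J1) - real m * q \<le> real m * (r / 2)" by (rule abs_le_D1[OF habs])
    moreover have "real m * (r / 2) = real m * r / 2" by simp
    moreover have "real m * (1 - q) = real m - real m * q" by (simp add: algebra_simps)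
    ultimately show ?thesis by linarith
  qed
  have a1: "\<bar>avg_over (\<lambda>j. f (Ss j)) J1 - \<mu>1\<bar> \<le> 2 * t / r"
    using avg_close[OF fin(1) c1 mr] hW s1 by simp
  have a0: "\<bar>avg_over (\<lambda>j. f (Ss j)) J0 - \<mu>0\<bar> \<le> 2 * t / r"
    using avg_close[OF fin(2) c0 mr] hU s0 by simp
  have "mmc_estimate m Ss f i = avg_over (\<lambda>j. f (Ss j)) J1 - avg_over (\<lambda>j. f (Ss j)) J0"
    unfolding mmc_estimate_def J1_def J0_def by simp
  moreover have "4 * t / r = 2 * t / r + 2 * t / r" by simp
  ultimately show ?thesis using a1 a0 by (simp add: abs_le_iff)
qed

lemma set_prod_dist: "S \<in> set_pmf (prod_dist n p) \<Longrightarrow> S \<subseteq> {0..<n}"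
  unfolding prod_dist_def by auto

lemma restR_sub: "restR n i h \<subseteq> {0..<n}" "i \<notin> restR n i h"
  unfolding restR_def by auto

lemma elem_facts:
  fixes f :: "nat set \<Rightarrow> real"
  assumes f0: "f {} = 0" and mo: "monotone_set_fun n f" and sm: "submodular_set_fun n f"
    and i: "i < n" and q: "0 \<le> p i" "p i \<le> 1"
    and fB: "\<And>S. S \<subseteq> {0..<n} \<Longrightarrow> f S \<le> B"
  defines "P' \<equiv> Pi_pmf ({0..<n}-{i}) False (\<lambda>i. bernoulli_pmf (p i))"
  defines "\<mu>1 \<equiv> measure_pmf.expectation P' (\<lambda>h. f (insert i (restR n i h)))"
  defines "\<mu>0 \<equiv> measure_pmf.expectation P' (\<lambda>h. f (restR n i h))"
  shows "measure_pmf.expectation (prod_dist n p) (\<lambda>S. if i \<in> S then f S - \<mu>1 else 0) = 0"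
    "measure_pmf.expectation (prod_dist n p) (\<lambda>S. if i \<notin> S then f S - \<mu>0 else 0) = 0"
    "measure_pmf.expectation (prod_dist n p) (\<lambda>S. (if i \<in> S then 1 else 0) - p i) = 0"
    "(1 - curvature n f) * f {i} \<le> \<mu>1 - \<mu>0" "\<mu>1 - \<mu>0 \<le> f {i}"
    "0 \<le> \<mu>1" "\<mu>1 \<le> B" "0 \<le> \<mu>0" "\<mu>0 \<le> B"
proof -
  have n: "0 < n" using i by simp
  have fnn: "\<And>S. S \<subseteq> {0..<n} \<Longrightarrow> 0 \<le> f S" using f_nonneg[OF f0 mo] by blast
  have fabs: "\<bar>f S\<bar> \<le> B" if "S \<subseteq> {0..<n}" for S using fnn[OF that] fB[OF that] by simp
  have insR: "insert i (restR n i h) \<subseteq> {0..<n}" for h using restR_sub(1) i by auto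
  have int1: "integrable P' (\<lambda>h. f (insert i (restR n i h)))"
    by (rule integrable_pmf_bdd[where B=B]) (rule fabs[OF insR])
  have int0: "integrable P' (\<lambda>h. f (restR n i h))"
    by (rule integrable_pmf_bdd[where B=B]) (rule fabs[OF restR_sub(1)])
  show "0 \<le> \<mu>1" unfolding \<mu>1_def
    by (intro measure_pmf.integral_ge_const int1) (auto simp: AE_measure_pmf_iff intro!: fnn insR)
  show "\<mu>1 \<le> B" unfolding \<mu>1_def
    by (intro measure_pmf.integral_le_const int1) (auto simp: AE_measure_pmf_iff intro!: fB insR)
  show "0 \<le> \<mu>0" unfolding \<mu>0_def
    by (intro measure_pmf.integral_ge_const int0) (auto simp: AE_measure_pmf_iff intro!: fnn restR_sub)
  show "\<mu>0 \<le> B" unfolding \<mu>0_def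
    by (intro measure_pmf.integral_le_const int0) (auto simp: AE_measure_pmf_iff intro!: fB restR_sub)
  have split: "measure_pmf.expectation (prod_dist n p) F =
     p i * measure_pmf.expectation P' (\<lambda>h. F (insert i (restR n i h)))
     + (1 - p i) * measure_pmf.expectation P' (\<lambda>h. F (restR n i h))"
    if "\<And>S. S \<subseteq> {0..<n} \<Longrightarrow> \<bar>F S\<bar> \<le> C" for F :: "nat set \<Rightarrow> real" and C
    unfolding P'_def by (rule prod_dist_split[where p=p and i=i and n=n, OF i q that])
  have bnd1: "\<bar>(if i \<in> S then f S - \<mu>1 else 0)\<bar> \<le> B + \<bar>\<mu>1\<bar>" if "S \<subseteq> {0..<n}" for S
    using fabs[OF that] fnn[OF that] by auto
  show "measure_pmf.expectation (prod_dist n p) (\<lambda>S. if i \<in> S then f S - \<mu>1 else 0) = 0"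
  proof -
    have "measure_pmf.expectation P' (\<lambda>h. f (insert i (restR n i h)) - \<mu>1) = 0"
      using int1 unfolding \<mu>1_def by simp
    moreover have "(\<lambda>h. if i \<in> insert i (restR n i h) then f (insert i (restR n i h)) - \<mu>1 else 0) = (\<lambda>h. f (insert i (restR n i h)) - \<mu>1)" by simp
    moreover have "(\<lambda>h. if i \<in> restR n i h then f (restR n i h) - \<mu>1 else 0) = (\<lambda>h. 0)" using restR_sub(2) by simp
    ultimately show ?thesis by (intro trans[OF split[OF bnd1]]) (simp only:, simp)
  qed
  have bnd0: "\<bar>(if i \<notin> S then f S - \<mu>0 else 0)\<bar> \<le> B + \<bar>\<mu>0\<bar>" if "S \<subseteq> {0..<n}" for S
    using fabs[OF that] fnn[OF that] by auto
  show "measure_pmf.expectation (prod_dist n p) (\<lambda>S. if i \<notin> S then f S - \<mu>0 else 0) = 0"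
  proof -
    have "measure_pmf.expectation P' (\<lambda>h. f (restR n i h) - \<mu>0) = 0"
      using int0 unfolding \<mu>0_def by simp
    moreover have "(\<lambda>h. if i \<notin> insert i (restR n i h) then f (insert i (restR n i h)) - \<mu>0 else 0) = (\<lambda>h. 0)" by simp
    moreover have "(\<lambda>h. if i \<notin> restR n i h then f (restR n i h) - \<mu>0 else 0) = (\<lambda>h. f (restR n i h) - \<mu>0)" using restR_sub(2) by simp
    ultimately show ?thesis by (intro trans[OF split[OF bnd0]]) (simp only:, simp)
  qed
  have bndY: "\<bar>(if i \<in> S then 1 else 0) - p i\<bar> \<le> 1" if "S \<subseteq> {0..<n}" for S
    using q by auto
  show "measure_pmf.expectation (prod_dist n p) (\<lambda>S. (if i \<in> S then 1 else 0) - p i) = 0"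
  proof -
    have "(\<lambda>h. (if i \<in> insert i (restR n i h) then 1 else 0) - p i) = (\<lambda>h. 1 - p i)" by simp
    moreover have "(\<lambda>h. (if i \<in> restR n i h then 1 else 0) - p i) = (\<lambda>h. - p i)" using restR_sub(2) by simp
    moreover have "measure_pmf.expectation P' (\<lambda>h. c) = c" for c :: real by simp
    ultimately show ?thesis by (intro trans[OF split[OF bndY]]) (simp only:, simp add: algebra_simps)
  qed
  have diff: "\<mu>1 - \<mu>0 = measure_pmf.expectation P' (\<lambda>h. marg f (restR n i h) i)"
  proof -
    have "\<mu>1 - \<mu>0 = measure_pmf.expectation P' (\<lambda>h. f (insert i (restR n i h)) - f (restR n i h))"
      unfolding \<mu>1_def \<mu>0_def by (rule Bochner_Integration.integral_diff[symmetric, OF int1 int0])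
    also have "\<dots> = measure_pmf.expectation P' (\<lambda>h. marg f (restR n i h) i)"
      by (simp add: marg_def)
    finally show ?thesis .
  qed
  have intm: "integrable P' (\<lambda>h. marg f (restR n i h) i)"
    unfolding marg_def using int1 int0 by (simp add:)
  have lo: "(1 - curvature n f) * f {i} \<le> marg f (restR n i h) i" for h
  proof -
    have "(1 - curvature n f) * f {i} \<le> marg f (insert i (restR n i h) - {i}) i"
      by (rule curv_facts(3)[OF f0 mo sm n i insR])
    also have "insert i (restR n i h) - {i} = restR n i h" using restR_sub(2) by auto
    finally show ?thesis .
  qed
  have hi: "marg f (restR n i h) i \<le> f {i}" for h
  proof -
    have "marg f (restR n i h) i \<le> marg f {} i"
      using sm restR_sub(1) i unfolding submodular_set_fun_def by auto
    then show ?thesis using f0 by (simp add: marg_def)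
  qed
  show "(1 - curvature n f) * f {i} \<le> \<mu>1 - \<mu>0" unfolding diff
    by (intro measure_pmf.integral_ge_const intm) (intro AE_I2 lo)
  show "\<mu>1 - \<mu>0 \<le> f {i}" unfolding diff
    by (intro measure_pmf.integral_le_const intm) (intro AE_I2 hi)
qed

lemma final_arith:
  fixes n m A :: nat and M r \<delta> a :: real
  assumes n: "1 \<le> n" and M: "0 < M" and r: "r = real n powr (-a)" and aA: "a \<le> real A"
    and m: "real n ^ (8 + 2 * A) \<le> real m" and nd: "132 / \<delta> \<le> real n" and d: "0 < \<delta>"
  shows "real n * (2 * ((real n * M)^2 / (real m * (M * r / (8 * real n ^ 2))^2)) + 1^2 / (real m * (r / 2)^2)) \<le> \<delta>"
proof -
  define x where "x = real n"
  have x1: "1 \<le> x" using n by (simp add: x_def)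
  have x0: "0 < x" using x1 by simp
  have r0: "0 < r" using r x0 by (simp add: x_def)
  have mpos: "0 < real m" using m x0 unfolding x_def[symmetric] by (smt (verit) zero_less_power)
  have e1: "(x * M)^2 / (real m * (M * r / (8 * x ^ 2))^2) = 64 * x^6 / (real m * r^2)"
    using M r0 x0 mpos by (simp add: field_simps power2_eq_square eval_nat_numeral)
  have e2: "1^2 / (real m * (r / 2)^2) = 4 / (real m * r^2)"
    using r0 mpos by (simp add: field_simps power2_eq_square)
  have e3: "1 / r^2 \<le> x ^ (2 * A)"
  proof -
    have "r^2 = x powr (of_nat 2 * (- a))" using r x0 unfolding x_def[symmetric]
      by (simp only:) (rule powr_power, simp)
    then have "r^2 = x powr (- (2 * a))" by simp
    then have "1 / r^2 = x powr (2 * a)" by (simp add: powr_minus divide_inverse)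
    also have "\<dots> \<le> x powr (real (2 * A))" using aA x1 by (intro powr_mono) auto
    also have "\<dots> = x ^ (2 * A)" using x0 by (rule powr_realpow)
    finally show ?thesis .
  qed
  have "x * (2 * (64 * x^6 / (real m * r^2)) + 4 / (real m * r^2)) = (128 * x^7 + 4 * x) * (1 / r^2) / real m"
    using r0 mpos by (simp add: field_simps eval_nat_numeral)
  also have "\<dots> \<le> (132 * x^7) * (1 / r^2) / real m"
  proof -
    have "4 * x \<le> 4 * x^7" using x1 by (simp add: self_le_power)
    then have "(128 * x^7 + 4 * x) \<le> 132 * x^7" by simp
    then show ?thesis using r0 mpos by (intro divide_right_mono mult_right_mono) auto
  qed
  also have "\<dots> \<le> (132 * x^7) * x ^ (2 * A) / real m"
    using e3 x0 mpos by (intro divide_right_mono mult_left_mono) auto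
  also have "\<dots> \<le> (132 * x^7) * x ^ (2 * A) / x ^ (8 + 2 * A)"
    using m x0 mpos unfolding x_def[symmetric] by (intro divide_left_mono) auto
  also have "\<dots> = 132 / x"
    using x0 by (simp add: power_add field_simps eval_nat_numeral)
  also have "\<dots> \<le> \<delta>" using nd d x0 unfolding x_def[symmetric] by (simp add: field_simps)
  finally show ?thesis unfolding x_def[symmetric] e1 e2 .
qed

lemma add3_le: "(u::real) \<le> a + b + c \<Longrightarrow> a \<le> X \<Longrightarrow> b \<le> X \<Longrightarrow> c \<le> Y \<Longrightarrow> u \<le> 2 * X + Y"
  by linarith

lemma main_case:
  fixes f :: "nat set \<Rightarrow> real" and p :: "nat \<Rightarrow> real" and n k m A :: nat and a \<delta> :: real
  assumes f0: "f {} = 0" and mo: "monotone_set_fun n f" and sm: "submodular_set_fun n f"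
    and k1: "1 \<le> k" and kn: "k \<le> n"
    and pb: "\<forall>i<n. real n powr (-a) \<le> p i \<and> p i \<le> 1 - real n powr (-a)"
    and m: "n ^ (8 + 2 * A) \<le> m" and aA: "a \<le> real A" and nd: "132 / \<delta> \<le> real n" and d: "0 < \<delta>"
    and Mpos: "\<exists>i<n. 0 < f {i}"
  shows "1 - \<delta> \<le> measure_pmf.prob (samples_pmf m (prod_dist n p))
             {Ss. \<forall>S \<in> mmc_outputs n k m Ss f. card S = k \<and>
                    ((1 - curvature n f)\<^sup>2 - 1 / real n) * opt_val n k f \<le> f S}"
proof -
  have n: "0 < n" using k1 kn by simp
  define r where "r = real n powr (-a)"
  have r0: "0 < r" unfolding r_def using n by simp
  have pr: "r \<le> p i" "p i \<le> 1 - r" if "i < n" for i using pb that unfolding r_def by auto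
  have p01: "0 \<le> p i" "p i \<le> 1" if "i < n" for i using pr[OF that] r0 by auto
  define M where "M = Max ((\<lambda>i. f {i}) ` {0..<n})"
  have fiM: "f {i} \<le> M" if "i < n" for i unfolding M_def using that by (intro Max_ge) auto
  obtain i1 where i1: "i1 < n" "M = f {i1}"
  proof -
    have "M \<in> (\<lambda>i. f {i}) ` {0..<n}" unfolding M_def using n by (intro Max_in) auto
    then show ?thesis using that by auto
  qed
  have M0: "0 < M" using Mpos fiM by force
  have Mopt: "M \<le> opt_val n k f" using i1 k1 by (auto intro!: opt_facts(2)[OF kn])
  have fnn: "0 \<le> f S" if "S \<subseteq> {0..<n}" for S using f_nonneg[OF f0 mo that] .
  have fB: "f S \<le> real n * M" if S: "S \<subseteq> {0..<n}" for S
  proof -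
    have finS: "finite S" using S by (rule finite_subset) simp
    have "f S \<le> (\<Sum>i\<in>S. f {i})" by (rule f_subadd[OF f0 sm S])
    also have "\<dots> \<le> (\<Sum>i\<in>S. M)" using S fiM by (intro sum_mono) auto
    also have "\<dots> = real (card S) * M" by simp
    also have "\<dots> \<le> real n * M"
    proof -
      have "card S \<le> card {0..<n}" using S by (intro card_mono) auto
      then show ?thesis using M0 by (intro mult_right_mono) auto
    qed
    finally show ?thesis .
  qed
  define P' where "P' i = Pi_pmf ({0..<n}-{i}) False (\<lambda>i. bernoulli_pmf (p i))" for i
  define \<mu>1 where "\<mu>1 i = measure_pmf.expectation (P' i) (\<lambda>h. f (insert i (restR n i h)))" for i
  define \<mu>0 where "\<mu>0 i = measure_pmf.expectation (P' i) (\<lambda>h. f (restR n i h))" for i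
  define D where "D = prod_dist n p"
  define t where "t = M * r / (8 * real n ^ 2)"
  have t0: "0 < t" unfolding t_def using M0 r0 n by simp
  define gW where "gW i S = (if i \<in> S then f S - \<mu>1 i else 0)" for i S
  define gU where "gU i S = (if i \<notin> S then f S - \<mu>0 i else 0)" for i S
  define gY where "gY i S = (if i \<in> S then 1 else 0) - p i" for i S
  have EF: "measure_pmf.expectation D (gW i) = 0 \<and> measure_pmf.expectation D (gU i) = 0 \<and>
     measure_pmf.expectation D (gY i) = 0 \<and>
     (1 - curvature n f) * f {i} \<le> \<mu>1 i - \<mu>0 i \<and> \<mu>1 i - \<mu>0 i \<le> f {i} \<and>
     0 \<le> \<mu>1 i \<and> \<mu>1 i \<le> real n * M \<and> 0 \<le> \<mu>0 i \<and> \<mu>0 i \<le> real n * M" if i: "i < n" for i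
    using elem_facts[where p=p and i=i and n=n and f=f, OF f0 mo sm i p01[OF i] fB]
    unfolding gW_def gU_def gY_def D_def \<mu>1_def \<mu>0_def P'_def by auto
  define EW where "EW i = {Ss. \<bar>\<Sum>j\<in>{0..<m}. gW i (Ss j)\<bar> > real m * t}" for i
  define EU where "EU i = {Ss. \<bar>\<Sum>j\<in>{0..<m}. gU i (Ss j)\<bar> > real m * t}" for i
  define EY where "EY i = {Ss. \<bar>\<Sum>j\<in>{0..<m}. gY i (Ss j)\<bar> > real m * (r / 2)}" for i
  define SP where "SP = samples_pmf m D"
  have SPdef: "SP = Pi_pmf {0..<m} {} (\<lambda>_. D)" unfolding SP_def samples_pmf_def ..
  have mpos: "0 < m"
  proof -
    have "0 < n ^ (8 + 2 * A)" using n by simp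
    then show ?thesis using m by linarith
  qed
  have PW: "measure_pmf.prob SP (EW i) \<le> (real n * M)^2 / (real m * t^2)" if i: "i < n" for i
    unfolding SPdef EW_def
  proof (rule sample_dev[OF _ _ t0 mpos])
    fix S assume "S \<in> set_pmf D"
    then have S: "S \<subseteq> {0..<n}" unfolding D_def by (rule set_prod_dist)
    show "\<bar>gW i S\<bar> \<le> real n * M" using fnn[OF S] fB[OF S] EF[OF i] unfolding gW_def by auto
  next
    show "measure_pmf.expectation D (gW i) = 0" using EF[OF i] by simp
  qed
  have PU: "measure_pmf.prob SP (EU i) \<le> (real n * M)^2 / (real m * t^2)" if i: "i < n" for i
    unfolding SPdef EU_def
  proof (rule sample_dev[OF _ _ t0 mpos])
    fix S assume "S \<in> set_pmf D"
    then have S: "S \<subseteq> {0..<n}" unfolding D_def by (rule set_prod_dist)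
    show "\<bar>gU i S\<bar> \<le> real n * M" using fnn[OF S] fB[OF S] EF[OF i] unfolding gU_def by auto
  next
    show "measure_pmf.expectation D (gU i) = 0" using EF[OF i] by simp
  qed
  have PY: "measure_pmf.prob SP (EY i) \<le> 1^2 / (real m * (r/2)^2)" if i: "i < n" for i
    unfolding SPdef EY_def
  proof (rule sample_dev[OF _ _ _ mpos])
    fix S assume "S \<in> set_pmf D"
    show "\<bar>gY i S\<bar> \<le> 1" using p01[OF i] unfolding gY_def by auto
  next
    show "measure_pmf.expectation D (gY i) = 0" using EF[OF i] by simp
  next
    show "0 < r / 2" using r0 by simp
  qed
  define Bad where "Bad = (\<Union>i\<in>{0..<n}. EW i \<union> EU i \<union> EY i)"
  have PBad: "measure_pmf.prob SP Bad \<le> \<delta>"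
  proof -
    have "measure_pmf.prob SP Bad \<le> (\<Sum>i\<in>{0..<n}. measure_pmf.prob SP (EW i \<union> EU i \<union> EY i))"
      unfolding Bad_def by (intro measure_pmf.finite_measure_subadditive_finite) auto
    also have "\<dots> \<le> (\<Sum>i\<in>{0..<n}. 2 * ((real n * M)^2 / (real m * t^2)) + 1^2 / (real m * (r/2)^2))"
    proof (intro sum_mono)
      fix i assume "i \<in> {0..<n}"
      then have i: "i < n" by simp
      have "measure_pmf.prob SP (EW i \<union> EU i \<union> EY i) \<le> measure_pmf.prob SP (EW i \<union> EU i) + measure_pmf.prob SP (EY i)"
        by (intro measure_Un_le) auto
      also have "\<dots> \<le> measure_pmf.prob SP (EW i) + measure_pmf.prob SP (EU i) + measure_pmf.prob SP (EY i)"
        using measure_Un_le[of "EW i" SP "EU i"] by simp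
      finally show "measure_pmf.prob SP (EW i \<union> EU i \<union> EY i) \<le> 2 * ((real n * M)^2 / (real m * t^2)) + 1^2 / (real m * (r/2)^2)"
        by (rule add3_le[OF _ PW[OF i] PU[OF i] PY[OF i]])
    qed
    also have "\<dots> = real n * (2 * ((real n * M)^2 / (real m * t^2)) + 1^2 / (real m * (r/2)^2))" by simp
    also have "\<dots> \<le> \<delta>" unfolding t_def
      by (rule final_arith[OF _ M0 r_def aA _ nd d]) (use n m in \<open>auto simp del: of_nat_power simp: of_nat_power[symmetric]\<close>)
    finally show ?thesis .
  qed
  have Good: "Ss \<in> {Ss. \<forall>S \<in> mmc_outputs n k m Ss f. card S = k \<and>
                    ((1 - curvature n f)\<^sup>2 - 1 / real n) * opt_val n k f \<le> f S}" if nb: "Ss \<notin> Bad" for Ss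
  proof -
    define \<eta> where "\<eta> = 4 * t / r"
    have est: "\<bar>mmc_estimate m Ss f i - (\<mu>1 i - \<mu>0 i)\<bar> \<le> \<eta>" if i: "i < n" for i
      unfolding \<eta>_def
    proof (rule est_close[OF mpos r0 pr[OF i]])
      have "Ss \<notin> EW i" "Ss \<notin> EU i" "Ss \<notin> EY i" using nb i unfolding Bad_def by auto
      then show "\<bar>\<Sum>j\<in>{0..<m}. (if i \<in> Ss j then f (Ss j) - \<mu>1 i else 0)\<bar> \<le> real m * t"
        "\<bar>\<Sum>j\<in>{0..<m}. (if i \<notin> Ss j then f (Ss j) - \<mu>0 i else 0)\<bar> \<le> real m * t"
        "\<bar>\<Sum>j\<in>{0..<m}. ((if i \<in> Ss j then 1 else 0) - p i)\<bar> \<le> real m * (r / 2)"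
        unfolding EW_def EU_def EY_def gW_def gU_def gY_def by auto
    qed
    have eta0: "0 \<le> \<eta>" unfolding \<eta>_def using t0 r0 by simp
    have eta1: "2 * real n * \<eta> \<le> 1 / real n * opt_val n k f"
    proof -
      have "2 * real n * \<eta> = M / real n" unfolding \<eta>_def t_def using r0 n
        by (simp add: field_simps power2_eq_square)
      also have "\<dots> \<le> opt_val n k f / real n" using Mopt n by (simp add: divide_right_mono)
      finally show ?thesis by simp
    qed
    show ?thesis
    proof (clarify)
      fix S assume S: "S \<in> mmc_outputs n k m Ss f"
      then have S': "S \<subseteq> {0..<n}" "card S = k"
        "\<forall>T'. T' \<subseteq> {0..<n} \<and> card T' = k \<longrightarrow> (\<Sum>i\<in>T'. mmc_estimate m Ss f i) \<le> (\<Sum>i\<in>S. mmc_estimate m Ss f i)"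
        unfolding mmc_outputs_def by auto
      show "card S = k \<and> ((1 - curvature n f)\<^sup>2 - 1 / real n) * opt_val n k f \<le> f S"
        using S'(2) det_main[OF f0 mo sm n k1 kn _ est eta0 eta1 S'] EF by auto
    qed
  qed
  have "1 - \<delta> \<le> 1 - measure_pmf.prob SP Bad" using PBad by simp
  also have "\<dots> = measure_pmf.prob SP (UNIV - Bad)"
    using measure_pmf.prob_compl[of Bad SP] by simp
  also have "\<dots> \<le> measure_pmf.prob SP {Ss. \<forall>S \<in> mmc_outputs n k m Ss f. card S = k \<and>
                    ((1 - curvature n f)\<^sup>2 - 1 / real n) * opt_val n k f \<le> f S}"
    using Good by (intro measure_pmf.finite_measure_mono) auto
  finally show ?thesis unfolding SP_def D_def .
qed

lemma trivial_ok:
  fixes f :: "nat set \<Rightarrow> real"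
  assumes f0: "f {} = 0" and mo: "monotone_set_fun n f" and sm: "submodular_set_fun n f"
    and kn: "k \<le> n" and S: "S \<in> mmc_outputs n k m Ss f"
    and cases: "k = 0 \<or> (1 \<le> k \<and> 1 \<le> \<epsilon>) \<or> (\<forall>i<n. f {i} = 0)"
  shows "card S = k \<and> ((1 - curvature n f)\<^sup>2 - \<epsilon>) * opt_val n k f \<le> f S"
proof -
  have S': "S \<subseteq> {0..<n}" "card S = k" using S unfolding mmc_outputs_def by auto
  have finS: "finite S" using S'(1) by (rule finite_subset) simp
  have fS: "0 \<le> f S" by (rule f_nonneg[OF f0 mo S'(1)])
  have opt0: "0 \<le> opt_val n k f" using opt_facts(2)[OF kn, of "{}" f] f0 by simp
  obtain Ts where Ts: "Ts \<subseteq> {0..<n}" "card Ts \<le> k" "f Ts = opt_val n k f"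
    using opt_facts(1)[OF kn] by blast
  have finTs: "finite Ts" using Ts(1) by (rule finite_subset) simp
  have "((1 - curvature n f)\<^sup>2 - \<epsilon>) * opt_val n k f \<le> f S"
  proof -
    consider "k = 0" | "1 \<le> k" "1 \<le> \<epsilon>" | "\<forall>i<n. f {i} = 0" using cases by blast
    then show ?thesis
    proof cases
      case 1
      then have "Ts = {}" using Ts(2) finTs by simp
      then have "opt_val n k f = 0" using Ts(3) f0 by simp
      then show ?thesis using fS by simp
    next
      case 2
      have n: "0 < n" using 2 kn by simp
      have "0 \<le> curvature n f" "curvature n f \<le> 1" using curv_facts(1,2)[OF f0 mo sm n] by auto
      then have "(1 - curvature n f)\<^sup>2 \<le> 1" by (simp add: power_le_one)
      then have "(1 - curvature n f)\<^sup>2 - \<epsilon> \<le> 0" using 2 by simp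
      then show ?thesis using opt0 fS by (meson mult_nonpos_nonneg order_trans)
    next
      case 3
      have "f Ts \<le> (\<Sum>i\<in>Ts. f {i})" by (rule f_subadd[OF f0 sm Ts(1)])
      also have "\<dots> = 0" using 3 Ts(1) by (intro sum.neutral) auto
      finally have "opt_val n k f = 0" using Ts(3) opt0 by simp
      then show ?thesis using fS by simp
    qed
  qed
  then show ?thesis using S'(2) by simp
qed

theorem theorem4:
  fixes a \<delta> :: real
  assumes "a \<ge> 0" and "0 < \<delta>" and "\<delta> < 1"
  shows "\<exists>(b::nat) (\<epsilon>::nat \<Rightarrow> real). \<epsilon> \<longlonglongrightarrow> 0 \<and>
    (\<forall>n k (f::nat set \<Rightarrow> real) (p::nat \<Rightarrow> real) m.
       k \<le> n \<and> f {} = 0 \<and> monotone_set_fun n f \<and> submodular_set_fun n f \<and>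
       (\<forall>i<n. real n powr (-a) \<le> p i \<and> p i \<le> 1 - real n powr (-a)) \<and>
       m \<ge> n ^ b
       \<longrightarrow> measure_pmf.prob (samples_pmf m (prod_dist n p))
             {Ss. \<forall>S \<in> mmc_outputs n k m Ss f.
                    card S = k \<and>
                    f S \<ge> ((1 - curvature n f)\<^sup>2 - \<epsilon> n) * opt_val n k f}
           \<ge> 1 - \<delta>)"
proof -
  define A where "A = nat \<lceil>a\<rceil>"
  have aA: "a \<le> real A" unfolding A_def by linarith
  define \<epsilon> where "\<epsilon> n = (if real n < 132 / \<delta> then 1 else 1 / real n)" for n :: nat
  have lim: "\<epsilon> \<longlonglongrightarrow> 0"
  proof (rule Lim_transform_eventually[OF lim_inverse_n'])
    show "\<forall>\<^sub>F n in sequentially. 1 / real n = \<epsilon> n"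
      unfolding eventually_sequentially
    proof (intro exI allI impI)
      fix n assume "nat \<lceil>132 / \<delta>\<rceil> \<le> n"
      then have "132 / \<delta> \<le> real n" by linarith
      then show "1 / real n = \<epsilon> n" unfolding \<epsilon>_def by simp
    qed
  qed
  have main: "1 - \<delta> \<le> measure_pmf.prob (samples_pmf m (prod_dist n p))
             {Ss. \<forall>S \<in> mmc_outputs n k m Ss f.
                    card S = k \<and>
                    f S \<ge> ((1 - curvature n f)\<^sup>2 - \<epsilon> n) * opt_val n k f}"
    if H: "k \<le> n" "f {} = 0" "monotone_set_fun n f" "submodular_set_fun n f"
       "\<forall>i<n. real n powr (-a) \<le> p i \<and> p i \<le> 1 - real n powr (-a)" "m \<ge> n ^ (8 + 2 * A)"
    for n k m and f :: "nat set \<Rightarrow> real" and p :: "nat \<Rightarrow> real"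
  proof (cases "k = 0 \<or> (1 \<le> k \<and> 1 \<le> \<epsilon> n) \<or> (\<forall>i<n. f {i} = 0)")
    case True
    have "{Ss. \<forall>S \<in> mmc_outputs n k m Ss f. card S = k \<and>
                    f S \<ge> ((1 - curvature n f)\<^sup>2 - \<epsilon> n) * opt_val n k f} = UNIV"
      using trivial_ok[OF H(2,3,4,1) _ True] by blast
    then show ?thesis using \<open>0 < \<delta>\<close> by (simp add: measure_pmf.prob_space)
  next
    case False
    then have k1: "1 \<le> k" and e: "\<epsilon> n < 1" and Mpos: "\<exists>i<n. 0 < f {i}"
      using f_nonneg[OF H(2,3), of "{_}"] by (auto simp: not_le) (metis less_eq_real_def atLeastLessThan_iff empty_subsetI insert_subset zero_le)
    have nd: "132 / \<delta> \<le> real n" using e unfolding \<epsilon>_def by (auto split: if_splits)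
    have en: "\<epsilon> n = 1 / real n" using nd unfolding \<epsilon>_def by simp
    show ?thesis unfolding en
      by (rule main_case[OF H(2,3,4) k1 H(1) H(5) H(6) aA nd \<open>0 < \<delta>\<close> Mpos])
  qed
  show ?thesis
    by (rule exI[of _ "8 + 2 * A"], rule exI[of _ \<epsilon>]) (use lim main in blast)
qed

end
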